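(* Let $n\ge 2$ be an integer and let $$\mathcal{T}_n:=\{(0,S_1,\dots,S_{2n})\in\mathbb{Z}^{2n+1}: |S_i-S_{i-1}|=1 \text{ for } 1\le i\le 2n\ (S_0=0),\ S_{2n}=0,\ S_i\ge 0 \text{ for all } 1\le i\le 2n-1\}.$$ For a path $(0,S_1,\dots,S_{2n})\in\mathcal{T}_n$ let $N(0,S_1,\dots,S_{2n}):=|\{i\in\{1,\dots,n-1\}: S_{2i}=0\}|$, and set $$C_n:=\{S\in\mathcal{T}_n: N(S)=0\},\qquad D_n:=\{S\in\mathcal{T}_n: N(S)=1\}.$$ For $(0,S_1,\dots,S_{2n})\in C_n$ let $\tau:=\min\{k>1: S_k=1\}$, and for $\ell=1,\dots,2n$ define $$T_\ell:=\begin{cases}S_\ell-2 & \text{if } 1<\ell<\tau \text{ and } S_{\ell+1}=S_\ell-1,\\ S_\ell & \text{otherwise},\end{cases}$$ and let $\Phi_2(0,S_1,\dots,S_{2n}):=(0,T_1,\dots,T_{2n})$. Then $\Phi_2$ is a well-defined map from $C_n$ to $D_n$ and it is a bijection between $C_n$ and $D_n$.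
   Context: $C_n$ is the set of $2n$-step simple random walk paths from $0$ to $0$ that are strictly positive at all intermediate times $1,\dots,2n-1$; $D_n$ is the set of $2n$-step simple random walk paths from $0$ to $0$ that are nonnegative at all times and return to $0$ at exactly one intermediate time. *)

theory Defs
  imports Main
begin

text \<open>A path (0,S_1,...,S_2n) is represented as an int list of length 2n+1,
  whose i-th entry is S_i.\<close>

definition T :: "nat \<Rightarrow> int list set" where
  "T n = {S. length S = 2*n + 1 \<and> S ! 0 = 0
            \<and> (\<forall>i\<in>{1..2*n}. \<bar>S ! i - S ! (i - 1)\<bar> = 1)
            \<and> S ! (2*n) = 0
            \<and> (\<forall>i\<in>{1..2*n-1}. S ! i \<ge> 0)}"

definition N :: "nat \<Rightarrow> int list \<Rightarrow> nat" where
  "N n S = card {i\<in>{1..n-1}. S ! (2*i) = 0}"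

definition C :: "nat \<Rightarrow> int list set" where
  "C n = {S\<in>T n. N n S = 0}"

definition D :: "nat \<Rightarrow> int list set" where
  "D n = {S\<in>T n. N n S = 1}"

definition tau :: "int list \<Rightarrow> nat" where
  "tau S = (LEAST k. k > 1 \<and> S ! k = 1)"

definition Phi2 :: "int list \<Rightarrow> int list" where
  "Phi2 S = map (\<lambda>l. if 1 < l \<and> l < tau S \<and> S ! (l+1) = S ! l - 1
                      then S ! l - 2 else S ! l) [0..<length S]"

end

theory Submission
  imports Defs
begin

lemma T_D: assumes "S \<in> T n"
  shows "length S = 2*n+1" "S!0 = 0" "\<And>i. 1 \<le> i \<Longrightarrow> i \<le> 2*n \<Longrightarrow> \<bar>S!i - S!(i-1)\<bar> = 1"
    "S!(2*n) = 0" "\<And>i. 1 \<le> i \<Longrightarrow> i \<le> 2*n-1 \<Longrightarrow> S!i \<ge> 0"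
  using assms by (auto simp: T_def)

lemma T_I: "length S = 2*n+1 \<Longrightarrow> S!0 = 0 \<Longrightarrow> (\<And>i. 1 \<le> i \<Longrightarrow> i \<le> 2*n \<Longrightarrow> \<bar>S!i - S!(i-1)\<bar> = 1)
   \<Longrightarrow> S!(2*n) = 0 \<Longrightarrow> (\<And>i. 1 \<le> i \<Longrightarrow> i \<le> 2*n-1 \<Longrightarrow> S!i \<ge> 0) \<Longrightarrow> S \<in> T n"
  by (auto simp: T_def)

lemma T_parity: assumes "S \<in> T n" shows "i \<le> 2*n \<Longrightarrow> even (S!i) = even i"
proof (induction i)
  case 0 then show ?case using T_D(2)[OF assms] by simp
next
  case (Suc i)
  have "\<bar>S!(Suc i) - S!i\<bar> = 1" using T_D(3)[OF assms, of "Suc i"] Suc.prems by simp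
  hence "S!(Suc i) = S!i + 1 \<or> S!(Suc i) = S!i - 1" by arith
  with Suc show ?case by auto
qed

lemma N0: assumes "N n S = 0" "1 \<le> i" "i \<le> n-1" shows "S!(2*i) \<noteq> 0"
proof
  assume h: "S!(2*i) = 0"
  have fin: "finite {i\<in>{1..n-1}. S!(2*i) = 0}" by simp
  have "{i\<in>{1..n-1}. S!(2*i) = 0} = {}" using assms(1) fin unfolding N_def by (simp only: card_eq_0_iff) blast
  moreover have "i \<in> {i\<in>{1..n-1}. S!(2*i) = 0}" using h assms(2,3) by simp
  ultimately show False by blast
qed

lemma N0I: assumes "\<And>i. 1 \<le> i \<Longrightarrow> i \<le> n-1 \<Longrightarrow> S!(2*i) \<noteq> 0" shows "N n S = 0"
proof -
  have "{i\<in>{1..n-1}. S!(2*i) = 0} = {}" using assms by fastforce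
  then show ?thesis unfolding N_def by (simp only: card.empty)
qed

lemma N1: assumes "N n S = 1"
  shows "\<exists>k. 1\<le>k \<and> k\<le>n-1 \<and> S!(2*k)=0 \<and> (\<forall>i. 1\<le>i \<longrightarrow> i\<le>n-1 \<longrightarrow> S!(2*i)=0 \<longrightarrow> i=k)"
proof -
  have "card {i\<in>{1..n-1}. S!(2*i) = 0} = 1" using assms unfolding N_def .
  then obtain k where k: "{i\<in>{1..n-1}. S!(2*i) = 0} = {k}" by (rule card_1_singletonE)
  then have kin: "k \<in> {i\<in>{1..n-1}. S!(2*i) = 0}" by simp
  have "\<forall>i. 1\<le>i \<longrightarrow> i\<le>n-1 \<longrightarrow> S!(2*i)=0 \<longrightarrow> i=k"
  proof (intro allI impI)
    fix i assume "1\<le>i" "i\<le>n-1" "S!(2*i)=0"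
    then have "i \<in> {i\<in>{1..n-1}. S!(2*i) = 0}" by simp
    then have "i \<in> {k}" unfolding k .
    then show "i = k" by simp
  qed
  moreover have "1\<le>k" "k\<le>n-1" "S!(2*k)=0" using kin by simp_all
  ultimately show ?thesis by blast
qed

lemma N1I: assumes "1\<le>k" "k\<le>n-1" "S!(2*k)=0" "\<And>i. 1\<le>i \<Longrightarrow> i\<le>n-1 \<Longrightarrow> S!(2*i)=0 \<Longrightarrow> i=k"
  shows "N n S = 1"
proof -
  have "{i\<in>{1..n-1}. S!(2*i) = 0} = {k}"
  proof (rule set_eqI, rule iffI)
    fix x assume "x \<in> {i\<in>{1..n-1}. S!(2*i) = 0}"
    then have "1 \<le> x" "x \<le> n-1" "S!(2*x) = 0" by simp_all
    then show "x \<in> {k}" using assms(4) by blast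
  next
    fix x assume "x \<in> {k}"
    then show "x \<in> {i\<in>{1..n-1}. S!(2*i) = 0}" using assms(1,2,3) by simp
  qed
  then show ?thesis unfolding N_def by simp
qed

lemma C_pos: assumes "S \<in> C n" "1 \<le> i" "i \<le> 2*n-1" shows "S!i \<ge> 1"
proof -
  have ST: "S \<in> T n" and N: "N n S = 0" using assms(1) by (simp_all add: C_def)
  have nn: "S!i \<ge> 0" using T_D(5)[OF ST] assms(2,3) by blast
  have "S!i \<noteq> 0"
  proof (cases "even i")
    case True then obtain j where j: "i = 2*j" by blast
    have "1 \<le> j" "j \<le> n-1" using assms(2,3) j by simp_all
    then have "S!(2*j) \<noteq> 0" by (rule N0[OF N])
    then show ?thesis using j by simp
  next
    case False
    have "i \<le> 2*n" using assms(3) by simp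
    then have "even (S!i) = even i" by (rule T_parity[OF ST])
    then have "odd (S!i)" using False by simp
    then show ?thesis by auto
  qed
  with nn show ?thesis by simp
qed

lemma C_tau: assumes "S \<in> C n" "n \<ge> 2"
  shows "1 < tau S" "tau S \<le> 2*n-1" "S!(tau S) = 1" "\<And>k. 1<k \<Longrightarrow> k<tau S \<Longrightarrow> S!k \<noteq> 1" "odd (tau S)"
proof -
  have ST: "S \<in> T n" using assms(1) by (simp add: C_def)
  have a: "\<bar>S!(2*n) - S!(2*n-1)\<bar> = 1" using T_D(3)[OF ST, of "2*n"] assms(2) by simp
  have b: "S!(2*n-1) \<ge> 1" using C_pos[OF assms(1), of "2*n-1"] assms(2) by simp
  have e: "S!(2*n-1) = 1" using a b T_D(4)[OF ST] by simp
  have ex: "1 < 2*n-1 \<and> S!(2*n-1) = 1" using e assms(2) by simp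
  have L: "1 < tau S \<and> S!(tau S) = 1" unfolding tau_def by (rule LeastI[of "\<lambda>k. 1<k \<and> S!k=1", OF ex])
  then show t1: "1 < tau S" "S!(tau S) = 1" by simp_all
  have "tau S \<le> 2*n-1" unfolding tau_def by (rule Least_le[of "\<lambda>k. 1<k \<and> S!k=1", OF ex])
  then show t2: "tau S \<le> 2*n-1" .
  show "\<And>k. 1<k \<Longrightarrow> k<tau S \<Longrightarrow> S!k \<noteq> 1"
  proof -
    fix k assume k: "1<k" "k<tau S"
    have "\<not> (1 < k \<and> S!k = 1)" using not_less_Least[of k "\<lambda>k. 1<k \<and> S!k=1"] k(2) unfolding tau_def by blast
    then show "S!k \<noteq> 1" using k(1) by blast
  qed
  have "even (S!(tau S)) = even (tau S)" using T_parity[OF ST, of "tau S"] t2 by simp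
  then show "odd (tau S)" using t1(2) by simp
qed

lemma Phi2_nth: "m < length S \<Longrightarrow>
   Phi2 S ! m = (if 1<m \<and> m<tau S \<and> S!(m+1) = S!m - 1 then S!m - 2 else S!m)"
  by (simp add: Phi2_def)

lemma Phi2_length: "length (Phi2 S) = length S" by (simp add: Phi2_def)

lemma Phi2_C1: assumes "S \<in> C n" "n \<ge> 2" "m < tau S" shows "Phi2 S ! m = S!(m+1) - 1"
proof -
  have ST: "S \<in> T n" using assms(1) by (simp add: C_def)
  have t2: "tau S \<le> 2*n-1" by (rule C_tau(2)[OF assms(1,2)])
  have len: "length S = 2*n+1" using T_D(1)[OF ST] .
  have mlen: "m < length S" using assms(3) t2 len by simp
  have s0: "S!0 = 0" by (rule T_D(2)[OF ST])
  have a1: "\<bar>S!1 - S!(1-1)\<bar> = 1" using T_D(3)[OF ST, of 1] assms(2) by simp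
  have b1: "S!1 \<ge> 1" using C_pos[OF assms(1), of 1] assms(2) by simp
  have s1: "S!1 = 1" using a1 b1 s0 by simp
  show ?thesis
  proof (cases "m \<le> 1")
    case True
    then consider "m = 0" | "m = 1" by linarith
    then show ?thesis
    proof cases
      case 1
      have "Phi2 S ! 0 = S!0" using Phi2_nth[of 0 S] mlen 1 by simp
      then show ?thesis using 1 s0 s1 by simp
    next
      case 2
      have a2: "\<bar>S!2 - S!(2-1)\<bar> = 1" using T_D(3)[OF ST, of 2] assms(2) by simp
      have b2: "S!2 \<ge> 1" using C_pos[OF assms(1), of 2] assms(2) by simp
      have s2: "S!2 = 2" using a2 b2 s1 by simp
      have "Phi2 S ! 1 = S!1" using Phi2_nth[of 1 S] mlen 2 by simp
      then show ?thesis using 2 s1 s2 by (simp add: numeral_2_eq_2)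
    qed
  next
    case False
    have st: "\<bar>S!(m+1) - S!(m+1-1)\<bar> = 1" using T_D(3)[OF ST, of "m+1"] assms(3) t2 by simp
    have e: "Phi2 S ! m = (if S!(m+1) = S!m - 1 then S!m - 2 else S!m)"
      using Phi2_nth[of m S] mlen False assms(3) by simp
    show ?thesis using st unfolding e by auto
  qed
qed

lemma Phi2_C2: assumes "tau S \<le> m" "m < length S" shows "Phi2 S ! m = S!m"
  using Phi2_nth[of m S] assms by auto

lemma Phi2_in_D: assumes "S \<in> C n" "n \<ge> 2" shows "Phi2 S \<in> D n"
proof -
  have ST: "S \<in> T n" and N: "N n S = 0" using assms by (auto simp: C_def)
  note tt = C_tau[OF assms]
  define t where "t = tau S"
  have len: "length S = 2*n+1" using T_D(1)[OF ST] .
  let ?U = "Phi2 S"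
  have U1: "\<And>m. m < t \<Longrightarrow> ?U!m = S!(m+1) - 1" unfolding t_def by (rule Phi2_C1[OF assms])
  have U2: "\<And>m. t \<le> m \<Longrightarrow> m \<le> 2*n \<Longrightarrow> ?U!m = S!m" unfolding t_def
    by (rule Phi2_C2) (simp_all add: len)
  have t1: "1 < t" "t \<le> 2*n-1" "S!t = 1" "odd t" unfolding t_def using tt(1,2,3,5) by simp_all
  have UT: "?U \<in> T n"
  proof (rule T_I)
    show "length ?U = 2*n+1" using len Phi2_length by simp
    have s1: "\<bar>S!1 - S!(1-1)\<bar> = 1" using T_D(3)[OF ST, of 1] assms(2) by simp
    have s1': "S!1 \<ge> 1" using C_pos[OF assms(1), of 1] assms(2) by simp
    have "S!1 = 1" using s1 s1' T_D(2)[OF ST] by simp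
    then show "?U!0 = 0" using U1[of 0] t1(1) by simp
    show "?U!(2*n) = 0" using U2[of "2*n"] t1(2) T_D(4)[OF ST] by simp
    fix i assume i: "1 \<le> i" "i \<le> 2*n"
    show "\<bar>?U!i - ?U!(i-1)\<bar> = 1"
    proof -
      consider "i < t" | "i = t" | "t < i" by linarith
      then show ?thesis
      proof cases
        case 1
        have a: "?U!i = S!(i+1) - 1" using U1[of i] 1 by simp
        have b: "?U!(i-1) = S!i - 1" using U1[of "i-1"] 1 i(1) by simp
        have c: "\<bar>S!(i+1) - S!(i+1-1)\<bar> = 1" using T_D(3)[OF ST, of "i+1"] 1 t1(2) by simp
        have "?U!i - ?U!(i-1) = S!(i+1) - S!(i+1-1)" using a b by simp
        with c show ?thesis by simp
      next
        case 2
        have a: "?U!i = S!i" using U2[of i] 2 i by simp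
        have b: "?U!(i-1) = S!i - 1" using U1[of "i-1"] 2 i(1) by simp
        show ?thesis using a b 2 t1(3) by simp
      next
        case 3
        have a: "?U!i = S!i" using U2[of i] 3 i by simp
        have b: "?U!(i-1) = S!(i-1)" using U2[of "i-1"] 3 i by simp
        show ?thesis using a b T_D(3)[OF ST, of i] i by simp
      qed
    qed
  next
    fix i assume i: "1 \<le> i" "i \<le> 2*n-1"
    show "?U!i \<ge> 0"
    proof (cases "i < t")
      case True
      have "S!(i+1) \<ge> 1" using C_pos[OF assms(1), of "i+1"] True t1(2) by simp
      then show ?thesis using U1[of i] True by simp
    next
      case False then show ?thesis using U2[of i] T_D(5)[OF ST, of i] i by simp
    qed
  qed
  obtain q where q: "t = 2*q+1" using t1(4) oddE by blast
  have "N n ?U = 1"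
  proof (rule N1I[of q])
    show "1 \<le> q" using t1(1) q by simp
    show "q \<le> n-1" using t1(2) q by simp
    show "?U!(2*q) = 0" using U1[of "2*q"] t1(3) q by simp
    fix i assume i: "1 \<le> i" "i \<le> n-1" "?U!(2*i) = 0"
    show "i = q"
    proof (cases "2*i < t")
      case True
      then have "S!(2*i+1) = 1" using U1[of "2*i"] i by simp
      then have "2*i+1 \<ge> t" using tt(4)[of "2*i+1"] i t_def by force
      then show ?thesis using True q by simp
    next
      case False
      then have "S!(2*i) = 0" using U2[of "2*i"] i by simp
      with N0[OF N i(1,2)] show ?thesis by simp
    qed
  qed
  with UT show ?thesis by (simp add: D_def)
qed

definition z0 :: "int list \<Rightarrow> nat" where "z0 U = (LEAST i. 1 \<le> i \<and> U!i = 0)"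

definition Psi :: "int list \<Rightarrow> int list" where
  "Psi U = map (\<lambda>l. if l = 0 then 0 else if l \<le> z0 U + 1 then U!(l-1) + 1 else U!l) [0..<length U]"

lemma Psi_nth: "l < length U \<Longrightarrow> Psi U ! l = (if l = 0 then 0 else if l \<le> z0 U + 1 then U!(l-1) + 1 else U!l)"
  by (simp add: Psi_def)

lemma Psi_length: "length (Psi U) = length U" by (simp add: Psi_def)

lemma D_z: assumes "U \<in> D n" "n \<ge> 2"
  shows "1 \<le> z0 U" "z0 U \<le> 2*n-2" "U!(z0 U) = 0" "\<And>i. 1 \<le> i \<Longrightarrow> i < z0 U \<Longrightarrow> U!i \<noteq> 0"
    "\<And>i. z0 U < i \<Longrightarrow> i \<le> 2*n-1 \<Longrightarrow> U!i \<noteq> 0" "U!(z0 U + 1) = 1"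
proof -
  have UT: "U \<in> T n" and N: "N n U = 1" using assms(1) by (simp_all add: D_def)
  obtain k where k: "1\<le>k" "k\<le>n-1" "U!(2*k)=0" and kk: "\<forall>i. 1\<le>i \<longrightarrow> i\<le>n-1 \<longrightarrow> U!(2*i)=0 \<longrightarrow> i=k"
    using N1[OF N] by blast
  have ex: "1 \<le> 2*k \<and> U!(2*k) = 0" using k by simp
  have L: "1 \<le> z0 U \<and> U!(z0 U) = 0" unfolding z0_def by (rule LeastI[of "\<lambda>i. 1 \<le> i \<and> U!i = 0", OF ex])
  then have z1: "1 \<le> z0 U" "U!(z0 U) = 0" by simp_all
  have z2: "z0 U \<le> 2*k" unfolding z0_def by (rule Least_le[of "\<lambda>i. 1 \<le> i \<and> U!i = 0", OF ex])
  have zle: "z0 U \<le> 2*n" using z2 k(2) by simp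
  have "even (U!(z0 U)) = even (z0 U)" using T_parity[OF UT] zle by blast
  then have "even (z0 U)" using z1(2) by simp
  then obtain j where j: "z0 U = 2*j" by blast
  have "1 \<le> j" "j \<le> n-1" "U!(2*j) = 0" using j z1 z2 k(2) by simp_all
  then have "j = k" using kk by blast
  with j have zk: "z0 U = 2*k" by simp
  show "1 \<le> z0 U" "U!(z0 U) = 0" using z1 by simp_all
  show "z0 U \<le> 2*n-2" using zk k(2) by simp
  show "\<And>i. 1 \<le> i \<Longrightarrow> i < z0 U \<Longrightarrow> U!i \<noteq> 0"
  proof -
    fix i assume i: "1 \<le> i" "i < z0 U"
    have "\<not> (1 \<le> i \<and> U!i = 0)" using not_less_Least[of i "\<lambda>i. 1 \<le> i \<and> U!i = 0"] i(2) unfolding z0_def by blast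
    then show "U!i \<noteq> 0" using i(1) by blast
  qed
  show "\<And>i. z0 U < i \<Longrightarrow> i \<le> 2*n-1 \<Longrightarrow> U!i \<noteq> 0"
  proof -
    fix i assume i: "z0 U < i" "i \<le> 2*n-1"
    show "U!i \<noteq> 0"
    proof (cases "even i")
      case True then obtain m where m: "i = 2*m" by blast
      have "1 \<le> m" "m \<le> n-1" "m \<noteq> k" using i m zk by simp_all
      then show ?thesis using kk m by blast
    next
      case False
      have "i \<le> 2*n" using i(2) by simp
      then have "even (U!i) = even i" using T_parity[OF UT] by blast
      then have "odd (U!i)" using False by simp
      then show ?thesis by auto
    qed
  qed
  have a: "\<bar>U!(z0 U + 1) - U!(z0 U + 1 - 1)\<bar> = 1" using T_D(3)[OF UT, of "z0 U + 1"] zk k(1,2) by simp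
  have b: "U!(z0 U + 1) \<ge> 0" using T_D(5)[OF UT, of "z0 U + 1"] zk k(1,2) by simp
  show "U!(z0 U + 1) = 1" using a b z1(2) by simp
qed

lemma Psi_in_C: assumes "U \<in> D n" "n \<ge> 2" shows "Psi U \<in> C n"
proof -
  have UT: "U \<in> T n" using assms(1) by (simp add: D_def)
  note zz = D_z[OF assms]
  define z where "z = z0 U"
  have len: "length U = 2*n+1" using T_D(1)[OF UT] .
  let ?S = "Psi U"
  have z: "1 \<le> z" "z \<le> 2*n-2" "U!z = 0" "U!(z+1) = 1" using zz(1,2,3,6) unfolding z_def by simp_all
  have S1: "?S!l = U!(l-1)+1" if "1 \<le> l" "l \<le> z+1" for l
    using Psi_nth[of l U] that len z(2) assms(2) unfolding z_def by simp
  have S2: "?S!l = U!l" if "z+1 < l" "l \<le> 2*n" for l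
    using Psi_nth[of l U] that len unfolding z_def by simp
  have ST: "?S \<in> T n"
  proof (rule T_I)
    show "length ?S = 2*n+1" using len Psi_length by simp
    show "?S!0 = 0" using Psi_nth[of 0 U] len by simp
    show "?S!(2*n) = 0" using S2[of "2*n"] z(1,2) T_D(4)[OF UT] assms(2) by simp
    fix i assume i: "1 \<le> i" "i \<le> 2*n"
    show "\<bar>?S!i - ?S!(i-1)\<bar> = 1"
    proof -
      consider "i = 1" | "2 \<le> i" "i \<le> z+1" | "i = z+2" | "z+2 < i" using i(1) by linarith
      then show ?thesis
      proof cases
        case 1
        have "?S!1 = 1" using S1[of 1] T_D(2)[OF UT] by simp
        moreover have "?S!0 = 0" using Psi_nth[of 0 U] len by simp
        ultimately show ?thesis using 1 by simp
      next
        case 2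
        have a: "?S!i = U!(i-1)+1" using S1[of i] 2 by simp
        have b: "?S!(i-1) = U!(i-1-1)+1" using S1[of "i-1"] 2 by simp
        have c: "\<bar>U!(i-1) - U!(i-1-1)\<bar> = 1" using T_D(3)[OF UT, of "i-1"] 2 i by simp
        show ?thesis using a b c by simp
      next
        case 3
        have a: "?S!i = U!(z+2)" using S2[of i] 3 z(2) assms(2) by simp
        have b: "?S!(i-1) = U!(z+1)" using S1[of "z+1"] 3 z(3,4) by simp
        have c: "\<bar>U!(z+2) - U!(z+2-1)\<bar> = 1" using T_D(3)[OF UT, of "z+2"] z(2) assms(2) by simp
        show ?thesis using a b c by simp
      next
        case 4
        have a: "?S!i = U!i" using S2[of i] 4 i by simp
        have b: "?S!(i-1) = U!(i-1)" using S2[of "i-1"] 4 i by simp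
        show ?thesis using a b T_D(3)[OF UT, of i] i by simp
      qed
    qed
  next
    fix i assume i: "1 \<le> i" "i \<le> 2*n-1"
    show "?S!i \<ge> 0"
    proof (cases "i \<le> z+1")
      case True
      have "U!(i-1) \<ge> 0"
      proof (cases "i = 1")
        case True then show ?thesis using T_D(2)[OF UT] by simp
      next
        case False then show ?thesis using T_D(5)[OF UT, of "i-1"] i by simp
      qed
      then show ?thesis using S1[of i] True i by simp
    next
      case False then show ?thesis using S2[of i] T_D(5)[OF UT, of i] i by simp
    qed
  qed
  have "N n ?S = 0"
  proof (rule N0I)
    fix i assume i: "1 \<le> i" "i \<le> n-1"
    show "?S!(2*i) \<noteq> 0"
    proof (cases "2*i \<le> z+1")
      case True
      have "U!(2*i-1) \<ge> 0" using T_D(5)[OF UT, of "2*i-1"] i by simp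
      then show ?thesis using S1[of "2*i"] True i by simp
    next
      case False
      have "U!(2*i) \<noteq> 0" using zz(5)[of "2*i"] False i unfolding z_def by simp
      then show ?thesis using S2[of "2*i"] False i by simp
    qed
  qed
  with ST show ?thesis by (simp add: C_def)
qed

lemma Phi2_Psi: assumes "U \<in> D n" "n \<ge> 2" shows "Phi2 (Psi U) = U"
proof -
  have UT: "U \<in> T n" using assms(1) by (simp add: D_def)
  note zz = D_z[OF assms]
  define z where "z = z0 U"
  have len: "length U = 2*n+1" using T_D(1)[OF UT] .
  let ?S = "Psi U"
  have SC: "?S \<in> C n" using Psi_in_C[OF assms] .
  have z: "1 \<le> z" "z \<le> 2*n-2" "U!z = 0" "U!(z+1) = 1" using zz(1,2,3,6) unfolding z_def by simp_all
  have S1: "?S!l = U!(l-1)+1" if "1 \<le> l" "l \<le> z+1" for l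
    using Psi_nth[of l U] that len z(2) assms(2) unfolding z_def by simp
  have S2: "?S!l = U!l" if "z+1 < l" "l \<le> 2*n" for l
    using Psi_nth[of l U] that len unfolding z_def by simp
  have tau: "tau ?S = z+1" unfolding tau_def
  proof (rule Least_equality)
    show "1 < z+1 \<and> ?S!(z+1) = 1" using S1[of "z+1"] z by simp
    fix k assume k: "1 < k \<and> ?S!k = 1"
    show "z+1 \<le> k"
    proof (rule ccontr)
      assume nk: "\<not> z+1 \<le> k"
      then have "U!(k-1) = 0" using S1[of k] k by simp
      moreover have "U!(k-1) \<noteq> 0"
      proof -
        have k1: "1 < k" using k by simp
        have "1 \<le> k-1" "k-1 < z0 U" using k1 nk unfolding z_def by linarith+
        then show ?thesis by (rule zz(4))
      qed
      ultimately show False by simp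
    qed
  qed
  show ?thesis
  proof (rule nth_equalityI)
    show "length (Phi2 ?S) = length U" using Phi2_length Psi_length by simp
    fix m assume "m < length (Phi2 ?S)"
    then have m: "m \<le> 2*n" using Phi2_length Psi_length len by simp
    show "Phi2 ?S ! m = U ! m"
    proof (cases "m < z+1")
      case True
      have "Phi2 ?S ! m = ?S!(m+1) - 1" using Phi2_C1[OF SC assms(2), of m] tau True by simp
      then show ?thesis using S1[of "m+1"] True by simp
    next
      case False
      have "Phi2 ?S ! m = ?S ! m" using Phi2_C2[of ?S m] tau m Psi_length len False by simp
      moreover have "?S ! m = U ! m"
      proof (cases "m = z+1")
        case True then show ?thesis using S1[of "z+1"] z by simp
      next
        case False then show ?thesis using S2[of m] \<open>\<not> m < z+1\<close> m by simp
      qed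
      ultimately show ?thesis by simp
    qed
  qed
qed

lemma Psi_Phi2: assumes "S \<in> C n" "n \<ge> 2" shows "Psi (Phi2 S) = S"
proof -
  have ST: "S \<in> T n" using assms(1) by (simp add: C_def)
  note tt = C_tau[OF assms]
  define t where "t = tau S"
  have len: "length S = 2*n+1" using T_D(1)[OF ST] .
  let ?U = "Phi2 S"
  have U1: "\<And>m. m < t \<Longrightarrow> ?U!m = S!(m+1) - 1" unfolding t_def by (rule Phi2_C1[OF assms])
  have U2: "\<And>m. t \<le> m \<Longrightarrow> m \<le> 2*n \<Longrightarrow> ?U!m = S!m" unfolding t_def
    by (rule Phi2_C2) (simp_all add: len)
  have t1: "1 < t" "t \<le> 2*n-1" "S!t = 1" unfolding t_def using tt(1,2,3) by simp_all
  have t4: "S!k \<noteq> 1" if "1<k" "k<t" for k using tt(4) that unfolding t_def by simp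
  have z: "z0 ?U = t - 1" unfolding z0_def
  proof (rule Least_equality)
    show "1 \<le> t-1 \<and> ?U!(t-1) = 0" using U1[of "t-1"] t1 by simp
    fix i assume i: "1 \<le> i \<and> ?U!i = 0"
    show "t-1 \<le> i"
    proof (rule ccontr)
      assume ni: "\<not> t-1 \<le> i"
      then have "S!(i+1) = 1" using U1[of i] i by simp
      moreover have "S!(i+1) \<noteq> 1" using t4[of "i+1"] i ni by simp
      ultimately show False by simp
    qed
  qed
  show ?thesis
  proof (rule nth_equalityI)
    show "length (Psi ?U) = length S" using Phi2_length Psi_length by simp
    fix l assume "l < length (Psi ?U)"
    then have l: "l < length ?U" "l \<le> 2*n" using Phi2_length Psi_length len by simp_all
    have e: "Psi ?U ! l = (if l = 0 then 0 else if l \<le> t then ?U!(l-1) + 1 else ?U!l)"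
      using Psi_nth[OF l(1)] z t1(1) by simp
    show "Psi ?U ! l = S ! l"
    proof (cases "l = 0")
      case True then show ?thesis using e T_D(2)[OF ST] by simp
    next
      case False
      show ?thesis
      proof (cases "l \<le> t")
        case True then show ?thesis using e False U1[of "l-1"] by simp
      next
        case nt: False then show ?thesis using e False U2[of l] l by simp
      qed
    qed
  qed
qed

theorem theorem2:
  fixes n :: nat
  assumes "n \<ge> 2"
  shows "Phi2 ` C n \<subseteq> D n \<and> bij_betw Phi2 (C n) (D n)"
proof -
  have A: "Phi2 ` C n \<subseteq> D n" using Phi2_in_D assms by auto
  have inj: "inj_on Phi2 (C n)"
    by (rule inj_on_inverseI[where g = Psi]) (use Psi_Phi2 assms in auto)
  have "D n \<subseteq> Phi2 ` C n"
  proof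
    fix U assume "U \<in> D n"
    then show "U \<in> Phi2 ` C n"
      using Phi2_Psi[OF _ assms] Psi_in_C[OF _ assms] by (metis imageI)
  qed
  with A inj show ?thesis by (auto simp: bij_betw_def)
qed

end
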